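(* Let $R,r>0$, $q_1=\frac1{2r}+\frac1{2R}$, and let $K^{-1/2}_0$ and $\{\mathbb{E}(t)\}$ be as in the context (touching disks). For $f,g\in K^{-1/2}_0$ write $PUf=(\hat f_1,\hat f_2)^T$, $PUg=(\hat g_1,\hat g_2)^T$. Then $$d\langle f,\mathbb{E}(t)g\rangle_{-1/2}=\begin{cases}\dfrac{1-2t}{2|t\ln(2|t|)|}\Big[\hat f_2\big(\tfrac{\ln(2|t|)}{q_1}\big)\overline{\hat g_2\big(\tfrac{\ln(2|t|)}{q_1}\big)}+\hat f_2\big(-\tfrac{\ln(2|t|)}{q_1}\big)\overline{\hat g_2\big(-\tfrac{\ln(2|t|)}{q_1}\big)}\Big]dt,& t\in[-1/2,0),\\[8pt]\dfrac{1-2t}{2|t\ln(2|t|)|}\Big[\hat f_1\big(\tfrac{\ln(2|t|)}{q_1}\big)\overline{\hat g_1\big(\tfrac{\ln(2|t|)}{q_1}\big)}+\hat f_1\big(-\tfrac{\ln(2|t|)}{q_1}\big)\overline{\hat g_1\big(-\tfrac{\ln(2|t|)}{q_1}\big)}\Big]dt,& t\in(0,1/2].\end{cases}$$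
   Context: Identify $\mathbb{R}^2$ with $\mathbb{C}$; for $a\in\mathbb{R}\setminus\{0\}$ let $B_a$ be the open disk of radius $|a|$ centered at $(a,0)$. Fix $R,r>0$, $\Omega=B_R\cup B_{-r}$, $q_1=\frac1{2r}+\frac1{2R}$. For $k\neq0$ let $\mathbb{S}(k)=\frac{1}{2|k|}\mathrm{diag}(1-e^{-|k|q_1},\,1+e^{-|k|q_1})$. $K^{-1/2}_0$ is the Hilbert space of densities $\varphi$ on $\partial\Omega$ represented by pairs $PU\varphi=(\hat\varphi_1,\hat\varphi_2)^T$ of measurable complex functions on $\mathbb{R}$ (mod a.e.) with $\int_{\mathbb{R}}\hat\varphi^T\mathbb{S}\overline{\hat\varphi}\,dk<\infty$, inner product $\langle\psi,\varphi\rangle_{-1/2}=\int_{\mathbb{R}}(PU\psi)^T\mathbb{S}\,\overline{PU\varphi}\,dk$ (here $P=\frac1{\sqrt2}\begin{bmatrix}-1&1\\1&1\end{bmatrix}$ and $U$ is the Fourier transform of the density pulled back by $z\mapsto1/z$; only the pair $PU\varphi$ matters). For $s\in\mathbb{R}\cup\{\infty\}$ let $\mathcal{P}^1(s)$, $\mathcal{P}^2(s)$ be the orthogonal projections with $PU(\mathcal{P}^1(s)\varphi)=(\chi_{(-\infty,s]}\hat\varphi_1,0)$, $PU(\mathcal{P}^2(s)\varphi)=(0,\chi_{(-\infty,s]}\hat\varphi_2)$ (with $\chi_{(-\infty,\infty]}\equiv1$), $\mathbb{I}=\mathcal{P}^1(\infty)+\mathcal{P}^2(\infty)$, and $$\mathbb{E}(t)=\begin{cases}\mathcal{P}^2\!\left(-\frac{\ln(-2t)}{q_1}\right)-\mathcal{P}^2\!\left(\frac{\ln(-2t)}{q_1}\right),&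 t\in[-1/2,0),\\[2pt]\mathcal{P}^1\!\left(\frac{\ln(2t)}{q_1}\right)-\mathcal{P}^1\!\left(-\frac{\ln(2t)}{q_1}\right)+\mathbb{I},& t\in(0,1/2],\end{cases}\qquad\mathbb{E}(0)=\lim_{t\to0^+}\mathbb{E}(t).$$ The claimed identity is an identity of measures in $t$ on $[-1/2,1/2]$ (densities holding for a.e. $t$). *)

theory Defs
  imports "HOL-Analysis.Analysis"
begin

text \<open>A density in K^{-1/2}_0 is represented by the pair PU phi = (phi1, phi2)
  of complex functions on the real line.\<close>
type_synonym dpair = "(real \<Rightarrow> complex) \<times> (real \<Rightarrow> complex)"

definition q1 :: "real \<Rightarrow> real \<Rightarrow> real" where
  "q1 R r = 1 / (2 * r) + 1 / (2 * R)"

definition S1 :: "real \<Rightarrow> real \<Rightarrow> real" where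
  "S1 q k = (1 - exp (- \<bar>k\<bar> * q)) / (2 * \<bar>k\<bar>)"

definition S2 :: "real \<Rightarrow> real \<Rightarrow> real" where
  "S2 q k = (1 + exp (- \<bar>k\<bar> * q)) / (2 * \<bar>k\<bar>)"

definition inK :: "real \<Rightarrow> dpair \<Rightarrow> bool" where
  "inK q \<phi> \<longleftrightarrow> fst \<phi> \<in> borel_measurable lborel \<and> snd \<phi> \<in> borel_measurable lborel \<and>
     integrable lborel (\<lambda>k. S1 q k * (cmod (fst \<phi> k))\<^sup>2) \<and>
     integrable lborel (\<lambda>k. S2 q k * (cmod (snd \<phi> k))\<^sup>2)"

definition ipK :: "real \<Rightarrow> dpair \<Rightarrow> dpair \<Rightarrow> complex" where
  "ipK q \<psi> \<phi> = (LINT k|lborel. complex_of_real (S1 q k) * fst \<psi> k * cnj (fst \<phi> k)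
                                 + complex_of_real (S2 q k) * snd \<psi> k * cnj (snd \<phi> k))"

definition Proj1 :: "ereal \<Rightarrow> dpair \<Rightarrow> dpair" where
  "Proj1 s \<phi> = ((\<lambda>k. if ereal k \<le> s then fst \<phi> k else 0), (\<lambda>k. 0))"

definition Proj2 :: "ereal \<Rightarrow> dpair \<Rightarrow> dpair" where
  "Proj2 s \<phi> = ((\<lambda>k. 0), (\<lambda>k. if ereal k \<le> s then snd \<phi> k else 0))"

definition Ident :: "dpair \<Rightarrow> dpair" where
  "Ident \<phi> = \<phi>"

definition padd :: "dpair \<Rightarrow> dpair \<Rightarrow> dpair" where
  "padd a b = ((\<lambda>k. fst a k + fst b k), (\<lambda>k. snd a k + snd b k))"

definition psub :: "dpair \<Rightarrow> dpair \<Rightarrow> dpair" where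
  "psub a b = ((\<lambda>k. fst a k - fst b k), (\<lambda>k. snd a k - snd b k))"

text \<open>The resolution of identity E(t). At t = 0 we use the limit t -> 0+,
  i.e. P^1(-\<infinity>) - P^1(\<infinity>) + I = I - P^1(\<infinity>).\<close>
definition Eres :: "real \<Rightarrow> real \<Rightarrow> dpair \<Rightarrow> dpair" where
  "Eres q t \<phi> =
     (if t < 0 then psub (Proj2 (ereal (- ln (- 2 * t) / q)) \<phi>) (Proj2 (ereal (ln (- 2 * t) / q)) \<phi>)
      else if 0 < t then padd (psub (Proj1 (ereal (ln (2 * t) / q)) \<phi>) (Proj1 (ereal (- ln (2 * t) / q)) \<phi>)) (Ident \<phi>)
      else psub (Ident \<phi>) (Proj1 \<infinity> \<phi>))"

definition Edens :: "real \<Rightarrow> dpair \<Rightarrow> dpair \<Rightarrow> real \<Rightarrow> complex" where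
  "Edens q f g t =
     (let a = ln (2 * \<bar>t\<bar>) / q;
          c = complex_of_real ((1 - 2 * t) / (2 * \<bar>t * ln (2 * \<bar>t\<bar>)\<bar>))
      in if t < 0 then c * (snd f a * cnj (snd g a) + snd f (- a) * cnj (snd g (- a)))
         else if 0 < t then c * (fst f a * cnj (fst g a) + fst f (- a) * cnj (fst g (- a)))
         else 0)"

end

theory Submission
  imports Defs
begin

lemma S1_nonneg: "0 \<le> S1 q k" if "0 < q"
proof -
  have "exp (- \<bar>k\<bar> * q) \<le> 1" using that by (simp add: mult_nonneg_nonneg)
  then show ?thesis unfolding S1_def by (auto intro!: divide_nonneg_nonneg)
qed

lemma S2_nonneg: "0 \<le> S2 q k"
  unfolding S2_def by (auto intro!: divide_nonneg_nonneg add_nonneg_nonneg)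

lemma S1_meas[measurable]: "S1 q \<in> borel_measurable borel"
  unfolding S1_def by measurable
lemma S2_meas[measurable]: "S2 q \<in> borel_measurable borel"
  unfolding S2_def by measurable

lemma cnj_meas: "f \<in> borel_measurable M \<Longrightarrow> (\<lambda>x. cnj (f x)) \<in> borel_measurable M"
  by (rule borel_measurable_continuous_on[where f=cnj]) (simp add: continuous_on_cnj continuous_on_id)

lemma h_int:
  fixes a b :: "real \<Rightarrow> complex"
  assumes S: "\<And>k. 0 \<le> S k" "S \<in> borel_measurable borel"
    and am: "a \<in> borel_measurable lborel" and bm: "b \<in> borel_measurable lborel"
    and ia: "integrable lborel (\<lambda>k. S k * (cmod (a k))\<^sup>2)"
    and ib: "integrable lborel (\<lambda>k. S k * (cmod (b k))\<^sup>2)"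
  shows "integrable lborel (\<lambda>k. complex_of_real (S k) * a k * cnj (b k))"
proof (rule Bochner_Integration.integrable_bound[where f="\<lambda>k. S k * (cmod (a k))\<^sup>2 + S k * (cmod (b k))\<^sup>2"])
  show "integrable lborel (\<lambda>k. S k * (cmod (a k))\<^sup>2 + S k * (cmod (b k))\<^sup>2)"
    using ia ib by (rule Bochner_Integration.integrable_add)
  have Sm: "S \<in> borel_measurable lborel" using S(2) by simp
  show "(\<lambda>k. complex_of_real (S k) * a k * cnj (b k)) \<in> borel_measurable lborel"
    using Sm am bm cnj_meas[OF bm] by measurable
  show "AE x in lborel. norm (complex_of_real (S x) * a x * cnj (b x)) \<le> norm (S x * (cmod (a x))\<^sup>2 + S x * (cmod (b x))\<^sup>2)"
  proof (rule AE_I2)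
    fix x
    have 1: "cmod (a x) * cmod (b x) \<le> (cmod (a x))\<^sup>2 + (cmod (b x))\<^sup>2"
      using sum_squares_bound[of "cmod (a x)" "cmod (b x)"] mult_nonneg_nonneg[OF norm_ge_zero norm_ge_zero, of "a x" "b x"] by linarith
    have "norm (complex_of_real (S x) * a x * cnj (b x)) = S x * (cmod (a x) * cmod (b x))"
      using S(1)[of x] by (simp add: norm_mult)
    also have "\<dots> \<le> S x * ((cmod (a x))\<^sup>2 + (cmod (b x))\<^sup>2)"
      by (rule mult_left_mono[OF 1 S(1)])
    also have "\<dots> = norm (S x * (cmod (a x))\<^sup>2 + S x * (cmod (b x))\<^sup>2)"
      using S(1)[of x] by (simp add: algebra_simps)
    finally show "norm (complex_of_real (S x) * a x * cnj (b x)) \<le> norm (S x * (cmod (a x))\<^sup>2 + S x * (cmod (b x))\<^sup>2)" .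
  qed
qed

lemma conv_leb:
  fixes f :: "real \<Rightarrow> complex"
  assumes fm: "f \<in> borel_measurable borel" and S: "S \<in> sets borel"
    and i: "set_integrable lebesgue S f"
  shows "set_integrable lborel S f" "(LINT x:S|lebesgue. f x) = (LINT x:S|lborel. f x)"
proof -
  have m: "(\<lambda>x. indicator S x *\<^sub>R f x) \<in> lborel \<rightarrow>\<^sub>M borel" using fm S by measurable
  show "set_integrable lborel S f" using i integrable_completion[OF m] unfolding set_integrable_def by simp
  show "(LINT x:S|lebesgue. f x) = (LINT x:S|lborel. f x)"
    unfolding set_lebesgue_integral_def using integral_completion[OF m] by simp
qed

lemma CV:
  fixes H :: "real \<Rightarrow> complex" and g g' :: "real \<Rightarrow> real"
  assumes H: "integrable lborel H" and S: "S \<in> sets borel" and T: "T \<in> sets borel"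
    and d: "\<And>x. x \<in> S \<Longrightarrow> (g has_field_derivative g' x) (at x)"
    and inj: "inj_on g S" and im: "g ` S = T"
  shows "set_integrable lebesgue S (\<lambda>x. \<bar>g' x\<bar> *\<^sub>R H (g x))"
    "(LINT x:S|lebesgue. \<bar>g' x\<bar> *\<^sub>R H (g x)) = (LINT y:T|lborel. H y)"
proof -
  have Hm: "H \<in> lborel \<rightarrow>\<^sub>M borel" using H by auto
  have "integrable lebesgue H" using integrable_completion[OF Hm] H by simp
  moreover have "T \<in> sets lebesgue" using T by simp
  ultimately have HT: "set_integrable lebesgue T H" unfolding set_integrable_def
    by (rule integrable_mult_indicator[rotated])
  have d': "\<And>x. x \<in> S \<Longrightarrow> (g has_field_derivative g' x) (at x within S)"
    using d by (rule DERIV_subset) auto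
  have Sl: "S \<in> sets lebesgue" using S by simp
  note cv = has_absolute_integral_change_of_variables_real[OF Sl d' inj, of H "integral T H"]
  have "H absolutely_integrable_on g ` S \<and> integral (g ` S) H = integral T H"
    using im HT by simp
  with cv have 1: "set_integrable lebesgue S (\<lambda>x. \<bar>g' x\<bar> *\<^sub>R H (g x))"
     and 2: "integral S (\<lambda>x. \<bar>g' x\<bar> *\<^sub>R H (g x)) = integral T H" by blast+
  show "set_integrable lebesgue S (\<lambda>x. \<bar>g' x\<bar> *\<^sub>R H (g x))" by (fact 1)
  have "(LINT x:S|lebesgue. \<bar>g' x\<bar> *\<^sub>R H (g x)) = integral S (\<lambda>x. \<bar>g' x\<bar> *\<^sub>R H (g x))"
    using set_lebesgue_integral_eq_integral(2)[OF 1] .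
  also have "\<dots> = integral T H" by (fact 2)
  also have "\<dots> = (LINT y:T|lebesgue. H y)" using set_lebesgue_integral_eq_integral(2)[OF HT] by simp
  also have "\<dots> = (LINT y:T|lborel. H y)"
  proof -
    have m: "(\<lambda>x. indicator T x *\<^sub>R H x) \<in> lborel \<rightarrow>\<^sub>M borel" using Hm T by measurable
    show ?thesis unfolding set_lebesgue_integral_def using integral_completion[OF m] by simp
  qed
  finally show "(LINT x:S|lebesgue. \<bar>g' x\<bar> *\<^sub>R H (g x)) = (LINT y:T|lborel. H y)" .
qed


lemma piece:
  fixes H E :: "real \<Rightarrow> complex" and g1 g2 g1' g2' :: "real \<Rightarrow> real"
  assumes H: "integrable lborel H" and Em: "E \<in> borel_measurable borel"
    and S: "S \<in> sets borel" and T1: "T1 \<in> sets borel" and T2: "T2 \<in> sets borel"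
    and d1: "\<And>x. x \<in> S \<Longrightarrow> (g1 has_field_derivative g1' x) (at x)"
    and i1: "inj_on g1 S" and m1: "g1 ` S = T1"
    and d2: "\<And>x. x \<in> S \<Longrightarrow> (g2 has_field_derivative g2' x) (at x)"
    and i2: "inj_on g2 S" and m2: "g2 ` S = T2"
    and eq: "\<And>x. x \<in> S \<Longrightarrow> E x = \<bar>g1' x\<bar> *\<^sub>R H (g1 x) + \<bar>g2' x\<bar> *\<^sub>R H (g2 x)"
  shows "set_integrable lborel S E"
    "(LINT x:S|lborel. E x) = (LINT y:T1|lborel. H y) + (LINT y:T2|lborel. H y)"
proof -
  note c1 = CV[OF H S T1 d1 i1 m1] and c2 = CV[OF H S T2 d2 i2 m2]
  have a: "set_integrable lebesgue S (\<lambda>x. \<bar>g1' x\<bar> *\<^sub>R H (g1 x) + \<bar>g2' x\<bar> *\<^sub>R H (g2 x))"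
    using c1(1) c2(1) by (rule set_integral_add)
  have b: "(LINT x:S|lebesgue. \<bar>g1' x\<bar> *\<^sub>R H (g1 x) + \<bar>g2' x\<bar> *\<^sub>R H (g2 x)) = (LINT y:T1|lborel. H y) + (LINT y:T2|lborel. H y)"
    using set_integral_add(2)[OF c1(1) c2(1)] c1(2) c2(2) by simp
  have ie: "set_integrable lebesgue S E"
    using a by (subst set_integrable_cong[OF refl refl eq]) auto
  have ee: "(LINT x:S|lebesgue. E x) = (LINT x:S|lebesgue. \<bar>g1' x\<bar> *\<^sub>R H (g1 x) + \<bar>g2' x\<bar> *\<^sub>R H (g2 x))"
    using S eq by (intro set_lebesgue_integral_cong) auto
  show "set_integrable lborel S E" using conv_leb(1)[OF Em S ie] .
  show "(LINT x:S|lborel. E x) = (LINT y:T1|lborel. H y) + (LINT y:T2|lborel. H y)"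
    using conv_leb(2)[OF Em S ie] ee b by simp
qed

definition hh1 :: "real \<Rightarrow> dpair \<Rightarrow> dpair \<Rightarrow> real \<Rightarrow> complex" where
  "hh1 q f g k = complex_of_real (S1 q k) * fst f k * cnj (fst g k)"
definition hh2 :: "real \<Rightarrow> dpair \<Rightarrow> dpair \<Rightarrow> real \<Rightarrow> complex" where
  "hh2 q f g k = complex_of_real (S2 q k) * snd f k * cnj (snd g k)"

lemma hh_int:
  assumes "0 < q" "inK q f" "inK q g"
  shows "integrable lborel (hh1 q f g)" "integrable lborel (hh2 q f g)"
proof -
  show "integrable lborel (hh1 q f g)" unfolding hh1_def
    using assms by (intro h_int[where S="S1 q"]) (auto simp: inK_def S1_nonneg)
  show "integrable lborel (hh2 q f g)" unfolding hh2_def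
    using assms by (intro h_int[where S="S2 q"]) (auto simp: inK_def S2_nonneg)
qed

lemma Edens_meas:
  assumes "inK q f" "inK q g"
  shows "Edens q f g \<in> borel_measurable borel"
proof -
  have [measurable]: "fst f \<in> borel_measurable borel" "snd f \<in> borel_measurable borel"
     "fst g \<in> borel_measurable borel" "snd g \<in> borel_measurable borel"
    using assms by (auto simp: inK_def)
  have [measurable]: "(\<lambda>x. cnj (fst g x)) \<in> borel_measurable borel" "(\<lambda>x. cnj (snd g x)) \<in> borel_measurable borel"
    by (auto intro: cnj_meas)
  show ?thesis unfolding Edens_def Let_def by measurable
qed

lemma Edens_neg:
  assumes q: "0 < q" and x: "-1/2 < x" "x < 0"
  shows "Edens q f g x = \<bar>1/(q*x)\<bar> *\<^sub>R hh2 q f g (ln (-2*x)/q) + \<bar>-1/(q*x)\<bar> *\<^sub>R hh2 q f g (-(ln (-2*x)/q))"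
proof -
  define L where "L = ln (-2*x)"
  define C where "C = (1 - 2 * x) / (2 * \<bar>x * L\<bar>)"
  have L: "L < 0" unfolding L_def using x by (intro ln_less_zero) auto
  have e: "exp L = -2*x" unfolding L_def using x by simp
  have ax: "2 * \<bar>x\<bar> = -2*x" using x by simp
  have s1: "S2 q (L/q) = (1-2*x)*q/(2*(-L))" unfolding S2_def using q L e
    by (simp add: abs_div abs_minus_commute, (simp add: field_simps)?)
  have s2: "S2 q (-(L/q)) = (1-2*x)*q/(2*(-L))" unfolding S2_def using q L e
    by (simp add: abs_div abs_minus_commute, (simp add: field_simps)?)
  have c1: "\<bar>1/(q*x)\<bar> * S2 q (L/q) = C" unfolding s1 C_def
    using q x L by (simp add: abs_mult abs_div, (simp add: field_simps)?)
  have c2: "\<bar>-1/(q*x)\<bar> * S2 q (-(L/q)) = C" unfolding s2 C_def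
    using q x L by (simp add: abs_mult abs_div, (simp add: field_simps)?)
  have E: "Edens q f g x = of_real C * (snd f (L/q) * cnj (snd g (L/q)) + snd f (-(L/q)) * cnj (snd g (-(L/q))))"
    unfolding Edens_def Let_def ax L_def[symmetric] C_def using x by simp
  have R: "\<bar>1/(q*x)\<bar> *\<^sub>R hh2 q f g (L/q) + \<bar>-1/(q*x)\<bar> *\<^sub>R hh2 q f g (-(L/q))
     = of_real (\<bar>1/(q*x)\<bar> * S2 q (L/q)) * (snd f (L/q) * cnj (snd g (L/q)))
       + of_real (\<bar>-1/(q*x)\<bar> * S2 q (-(L/q))) * (snd f (-(L/q)) * cnj (snd g (-(L/q))))"
    unfolding hh2_def scaleR_conv_of_real of_real_mult by (simp only: mult.assoc)
  show ?thesis
    unfolding L_def[symmetric] R c1 c2 E by (simp only: distrib_left)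
qed

lemma Edens_pos:
  assumes q: "0 < q" and x: "0 < x" "x < 1/2"
  shows "Edens q f g x = \<bar>1/(q*x)\<bar> *\<^sub>R hh1 q f g (ln (2*x)/q) + \<bar>-1/(q*x)\<bar> *\<^sub>R hh1 q f g (-(ln (2*x)/q))"
proof -
  define L where "L = ln (2*x)"
  define C where "C = (1 - 2 * x) / (2 * \<bar>x * L\<bar>)"
  have L: "L < 0" unfolding L_def using x by (intro ln_less_zero) auto
  have e: "exp L = 2*x" unfolding L_def using x by simp
  have ax: "2 * \<bar>x\<bar> = 2*x" using x by simp
  have s1: "S1 q (L/q) = (1-2*x)*q/(2*(-L))" unfolding S1_def using q L e
    by (simp add: abs_div abs_minus_commute, (simp add: field_simps)?)
  have s2: "S1 q (-(L/q)) = (1-2*x)*q/(2*(-L))" unfolding S1_def using q L e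
    by (simp add: abs_div abs_minus_commute, (simp add: field_simps)?)
  have c1: "\<bar>1/(q*x)\<bar> * S1 q (L/q) = C" unfolding s1 C_def
    using q x L by (simp add: abs_mult abs_div, (simp add: field_simps)?)
  have c2: "\<bar>-1/(q*x)\<bar> * S1 q (-(L/q)) = C" unfolding s2 C_def
    using q x L by (simp add: abs_mult abs_div, (simp add: field_simps)?)
  have E: "Edens q f g x = of_real C * (fst f (L/q) * cnj (fst g (L/q)) + fst f (-(L/q)) * cnj (fst g (-(L/q))))"
    unfolding Edens_def Let_def ax L_def[symmetric] C_def using x by simp
  have R: "\<bar>1/(q*x)\<bar> *\<^sub>R hh1 q f g (L/q) + \<bar>-1/(q*x)\<bar> *\<^sub>R hh1 q f g (-(L/q))
     = of_real (\<bar>1/(q*x)\<bar> * S1 q (L/q)) * (fst f (L/q) * cnj (fst g (L/q)))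
       + of_real (\<bar>-1/(q*x)\<bar> * S1 q (-(L/q))) * (fst f (-(L/q)) * cnj (fst g (-(L/q))))"
    unfolding hh1_def scaleR_conv_of_real of_real_mult by (simp only: mult.assoc)
  show ?thesis
    unfolding L_def[symmetric] R c1 c2 E by (simp only: distrib_left)
qed

lemma dneg1: fixes x q :: real shows "0 < q \<Longrightarrow> x < 0 \<Longrightarrow> ((\<lambda>x. ln (-2*x)/q) has_field_derivative 1/(q*x)) (at x)"
  by (auto intro!: derivative_eq_intros simp: field_simps)
lemma dneg2: fixes x q :: real shows "0 < q \<Longrightarrow> x < 0 \<Longrightarrow> ((\<lambda>x. -(ln (-2*x)/q)) has_field_derivative -1/(q*x)) (at x)"
  by (auto intro!: derivative_eq_intros simp: field_simps)
lemma dpos1: fixes x q :: real shows "0 < q \<Longrightarrow> 0 < x \<Longrightarrow> ((\<lambda>x. ln (2*x)/q) has_field_derivative 1/(q*x)) (at x)"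
  by (auto intro!: derivative_eq_intros simp: field_simps)
lemma dpos2: fixes x q :: real shows "0 < q \<Longrightarrow> 0 < x \<Longrightarrow> ((\<lambda>x. -(ln (2*x)/q)) has_field_derivative -1/(q*x)) (at x)"
  by (auto intro!: derivative_eq_intros simp: field_simps)


lemma img_gen: "(\<And>x. x \<in> S \<Longrightarrow> g x \<in> T) \<Longrightarrow> (\<And>y. y \<in> T \<Longrightarrow> h y \<in> S \<and> g (h y) = y) \<Longrightarrow> g ` S = T"
  by (auto intro!: image_eqI)

lemma lnq_less: "0 < q \<Longrightarrow> 0 < u \<Longrightarrow> (ln u / q < c) = (u < exp (q*c))" for q u c :: real
  by (metis divide_less_eq exp_less_cancel_iff exp_ln mult.commute)
lemma lnq_gt: "0 < q \<Longrightarrow> 0 < u \<Longrightarrow> (c < ln u / q) = (exp (q*c) < u)" for q u c :: real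
  by (metis less_divide_eq exp_less_cancel_iff exp_ln mult.commute)

lemma injN1: assumes q: "0 < q" and S: "S \<subseteq> {..<0}" shows "inj_on (\<lambda>x::real. ln (-2*x)/q) S"
proof (rule inj_onI)
  fix x y assume "x \<in> S" "y \<in> S" and e: "ln (-2*x)/q = ln (-2*y)/q"
  then have "0 < -2*x" "0 < -2*y" using S by auto
  moreover from e q have "ln (-2*x) = ln (-2*y)" by simp
  ultimately show "x = y" using ln_inj_iff by fastforce
qed
lemma injN2: assumes q: "0 < q" and S: "S \<subseteq> {..<0}" shows "inj_on (\<lambda>x::real. -(ln (-2*x)/q)) S"
proof (rule inj_onI)
  fix x y assume "x \<in> S" "y \<in> S" and e: "-(ln (-2*x)/q) = -(ln (-2*y)/q)"
  then have "0 < -2*x" "0 < -2*y" using S by auto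
  moreover from e q have "ln (-2*x) = ln (-2*y)" by simp
  ultimately show "x = y" using ln_inj_iff by fastforce
qed
lemma injP1: assumes q: "0 < q" and S: "S \<subseteq> {0<..}" shows "inj_on (\<lambda>x::real. ln (2*x)/q) S"
proof (rule inj_onI)
  fix x y assume "x \<in> S" "y \<in> S" and e: "ln (2*x)/q = ln (2*y)/q"
  then have "0 < 2*x" "0 < 2*y" using S by auto
  moreover from e q have "ln (2*x) = ln (2*y)" by simp
  ultimately show "x = y" using ln_inj_iff by fastforce
qed
lemma injP2: assumes q: "0 < q" and S: "S \<subseteq> {0<..}" shows "inj_on (\<lambda>x::real. -(ln (2*x)/q)) S"
proof (rule inj_onI)
  fix x y assume "x \<in> S" "y \<in> S" and e: "-(ln (2*x)/q) = -(ln (2*y)/q)"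
  then have "0 < 2*x" "0 < 2*y" using S by auto
  moreover from e q have "ln (2*x) = ln (2*y)" by simp
  ultimately show "x = y" using ln_inj_iff by fastforce
qed

lemma imgN1: fixes q t :: real assumes q: "0 < q" and t: "-1/2 < t" "t < 0"
  shows "(\<lambda>x. ln (-2*x)/q) ` {-1/2<..<t} = {ln (-2*t)/q<..<0}"
proof (rule img_gen[where h="\<lambda>y. - exp (q*y) / 2"])
  fix x assume x: "x \<in> {-1/2<..<t}"
  then have "ln (-2*t) < ln (-2*x)" "ln (-2*x) < 0" using t by (auto intro: ln_less_zero)
  then show "ln (-2*x)/q \<in> {ln (-2*t)/q<..<0}" using q by (auto simp: divide_strict_right_mono divide_neg_pos)
next
  fix y assume y: "y \<in> {ln (-2*t)/q<..<0}"
  then have "ln (-2*t) < q*y" "q*y < 0" using q t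
    by (auto simp: pos_divide_less_eq mult_pos_neg mult.commute)
  then have "exp (ln (-2*t)) < exp (q*y)" "q*y < 0" by auto
  then have "-2*t < exp (q*y)" "exp (q*y) < 1" using t by auto
  then show "- exp (q*y) / 2 \<in> {-1/2<..<t} \<and> ln (-2 * (- exp (q*y) / 2)) / q = y" using q by auto
qed

lemma imgN2: fixes q t :: real assumes q: "0 < q" and t: "-1/2 < t" "t < 0"
  shows "(\<lambda>x. -(ln (-2*x)/q)) ` {-1/2<..<t} = {0<..< -(ln (-2*t)/q)}"
proof (rule img_gen[where h="\<lambda>y. - exp (-(q*y)) / 2"])
  fix x assume x: "x \<in> {-1/2<..<t}"
  then have "ln (-2*t) < ln (-2*x)" "ln (-2*x) < 0" using t by (auto intro: ln_less_zero)
  then show "-(ln (-2*x)/q) \<in> {0<..< -(ln (-2*t)/q)}" using q by (auto simp: divide_strict_right_mono divide_neg_pos)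
next
  fix y assume y: "y \<in> {0<..< -(ln (-2*t)/q)}"
  then have "ln (-2*t)/q < -y" "0 < q*y" using q by auto
  then have "ln (-2*t) < -(q*y)" "-(q*y) < 0" using q
    by (auto simp: pos_divide_less_eq mult.commute)
  then have "exp (ln (-2*t)) < exp (-(q*y))" "-(q*y) < 0" by auto
  then have "-2*t < exp (-(q*y))" "exp (-(q*y)) < 1" using t by auto
  then show "- exp (-(q*y)) / 2 \<in> {-1/2<..<t} \<and> -(ln (-2 * (- exp (-(q*y)) / 2)) / q) = y" using q by auto
qed

lemma imgN1_0: fixes q :: real assumes q: "0 < q"
  shows "(\<lambda>x. ln (-2*x)/q) ` {-1/2<..<0} = {..<0}"
proof (rule img_gen[where h="\<lambda>y. - exp (q*y) / 2"])
  fix x assume x: "x \<in> {-1/2<..<(0::real)}"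
  then have "ln (-2*x) < 0" by (auto intro: ln_less_zero)
  then show "ln (-2*x)/q \<in> {..<0}" using q by (auto simp: divide_neg_pos)
next
  fix y :: real assume y: "y \<in> {..<0}"
  then have "q*y < 0" using q by (auto simp: mult_pos_neg)
  then have "exp (q*y) < 1" by auto
  then show "- exp (q*y) / 2 \<in> {-1/2<..<0} \<and> ln (-2 * (- exp (q*y) / 2)) / q = y" using q by auto
qed

lemma imgN2_0: fixes q :: real assumes q: "0 < q"
  shows "(\<lambda>x. -(ln (-2*x)/q)) ` {-1/2<..<0} = {0<..}"
proof (rule img_gen[where h="\<lambda>y. - exp (-(q*y)) / 2"])
  fix x assume x: "x \<in> {-1/2<..<(0::real)}"
  then have "ln (-2*x) < 0" by (auto intro: ln_less_zero)
  then show "-(ln (-2*x)/q) \<in> {0<..}" using q by (auto simp: divide_neg_pos)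
next
  fix y :: real assume y: "y \<in> {0<..}"
  then have "0 < q*y" using q by auto
  then have "exp (-(q*y)) < 1" by auto
  then show "- exp (-(q*y)) / 2 \<in> {-1/2<..<0} \<and> -(ln (-2 * (- exp (-(q*y)) / 2)) / q) = y" using q by auto
qed

lemma imgP1: fixes q t :: real assumes q: "0 < q" and t: "0 < t" "t \<le> 1/2"
  shows "(\<lambda>x. ln (2*x)/q) ` {0<..<t} = {..<ln (2*t)/q}"
proof (rule img_gen[where h="\<lambda>y. exp (q*y) / 2"])
  fix x assume x: "x \<in> {0<..<t}"
  then have "ln (2*x) < ln (2*t)" using t by auto
  then show "ln (2*x)/q \<in> {..<ln (2*t)/q}" using q by (auto simp: divide_strict_right_mono)
next
  fix y assume y: "y \<in> {..<ln (2*t)/q}"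
  then have "q*y < ln (2*t)" using q by (auto simp: pos_less_divide_eq mult.commute)
  then have "exp (q*y) < exp (ln (2*t))" by auto
  then have "exp (q*y) < 2*t" using t by auto
  then show "exp (q*y) / 2 \<in> {0<..<t} \<and> ln (2 * (exp (q*y) / 2)) / q = y" using q by auto
qed

lemma imgP2: fixes q t :: real assumes q: "0 < q" and t: "0 < t" "t \<le> 1/2"
  shows "(\<lambda>x. -(ln (2*x)/q)) ` {0<..<t} = {-(ln (2*t)/q)<..}"
proof (rule img_gen[where h="\<lambda>y. exp (-(q*y)) / 2"])
  fix x assume x: "x \<in> {0<..<t}"
  then have "ln (2*x) < ln (2*t)" using t by auto
  then show "-(ln (2*x)/q) \<in> {-(ln (2*t)/q)<..}" using q by (auto simp: divide_strict_right_mono)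
next
  fix y assume y: "y \<in> {-(ln (2*t)/q)<..}"
  then have "-y < ln (2*t)/q" by auto
  then have "-(q*y) < ln (2*t)" using q by (auto simp: pos_less_divide_eq mult.commute)
  then have "exp (-(q*y)) < exp (ln (2*t))" by auto
  then have "exp (-(q*y)) < 2*t" using t by auto
  then show "exp (-(q*y)) / 2 \<in> {0<..<t} \<and> -(ln (2 * (exp (-(q*y)) / 2)) / q) = y" using q by auto
qed


lemma pieceN:
  fixes q t :: real
  assumes q: "0 < q" and f: "inK q f" and g: "inK q g" and t: "-1/2 < t" "t < 0"
  shows "set_integrable lborel {-1/2<..<t} (Edens q f g)"
    "(LINT x:{-1/2<..<t}|lborel. Edens q f g x) = (LINT y:{ln (-2*t)/q<..<0}|lborel. hh2 q f g y) + (LINT y:{0<..< -(ln (-2*t)/q)}|lborel. hh2 q f g y)"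
proof -
  have sub: "{-1/2<..<t} \<subseteq> {..<0}" using t by auto
  have d1: "\<And>x. x \<in> {-1/2<..<t} \<Longrightarrow> ((\<lambda>x. ln (-2*x)/q) has_field_derivative 1/(q*x)) (at x)"
    using dneg1 q sub by auto
  have d2: "\<And>x. x \<in> {-1/2<..<t} \<Longrightarrow> ((\<lambda>x. -(ln (-2*x)/q)) has_field_derivative -1/(q*x)) (at x)"
    using dneg2 q sub by auto
  have eq: "\<And>x. x \<in> {-1/2<..<t} \<Longrightarrow> Edens q f g x = \<bar>1/(q*x)\<bar> *\<^sub>R hh2 q f g ((\<lambda>x. ln (-2*x)/q) x) + \<bar>-1/(q*x)\<bar> *\<^sub>R hh2 q f g ((\<lambda>x. -(ln (-2*x)/q)) x)"
    using Edens_neg[OF q] t by auto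
  have pr: "{-1/2<..<t} \<in> sets borel" "{ln (-2*t)/q<..<0} \<in> sets borel" "{0<..< -(ln (-2*t)/q)} \<in> sets borel"
     "inj_on (\<lambda>x. ln (-2*x)/q) {-1/2<..<t}" "inj_on (\<lambda>x. -(ln (-2*x)/q)) {-1/2<..<t}" "(\<lambda>x. ln (-2*x)/q) ` {-1/2<..<t} = {ln (-2*t)/q<..<0}" "(\<lambda>x. -(ln (-2*x)/q)) ` {-1/2<..<t} = {0<..< -(ln (-2*t)/q)}"
    using injN1[OF q sub] injN2[OF q sub] imgN1[OF q t] imgN2[OF q t] by auto
  note P = piece[OF hh_int(2)[OF q f g] Edens_meas[OF f g] pr(1,2,3) d1 pr(4,6) d2 pr(5,7) eq]
  show "set_integrable lborel {-1/2<..<t} (Edens q f g)" by (rule P(1))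
  show "(LINT x:{-1/2<..<t}|lborel. Edens q f g x) = (LINT y:{ln (-2*t)/q<..<0}|lborel. hh2 q f g y) + (LINT y:{0<..< -(ln (-2*t)/q)}|lborel. hh2 q f g y)"
    by (rule P(2))
qed

lemma pieceN0:
  fixes q t :: real
  assumes q: "0 < q" and f: "inK q f" and g: "inK q g" 
  shows "set_integrable lborel {-1/2<..<0} (Edens q f g)"
    "(LINT x:{-1/2<..<0}|lborel. Edens q f g x) = (LINT y:{..<0}|lborel. hh2 q f g y) + (LINT y:{0<..}|lborel. hh2 q f g y)"
proof -
  have sub: "{-1/2<..<0} \<subseteq> {..<0}" by auto
  have d1: "\<And>x. x \<in> {-1/2<..<0} \<Longrightarrow> ((\<lambda>x. ln (-2*x)/q) has_field_derivative 1/(q*x)) (at x)"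
    using dneg1 q sub by auto
  have d2: "\<And>x. x \<in> {-1/2<..<0} \<Longrightarrow> ((\<lambda>x. -(ln (-2*x)/q)) has_field_derivative -1/(q*x)) (at x)"
    using dneg2 q sub by auto
  have eq: "\<And>x. x \<in> {-1/2<..<0} \<Longrightarrow> Edens q f g x = \<bar>1/(q*x)\<bar> *\<^sub>R hh2 q f g ((\<lambda>x. ln (-2*x)/q) x) + \<bar>-1/(q*x)\<bar> *\<^sub>R hh2 q f g ((\<lambda>x. -(ln (-2*x)/q)) x)"
    using Edens_neg[OF q] q by auto
  have pr: "{-1/2<..<0::real} \<in> sets borel" "{..<0::real} \<in> sets borel" "{0::real<..} \<in> sets borel"
     "inj_on (\<lambda>x. ln (-2*x)/q) {-1/2<..<0}" "inj_on (\<lambda>x. -(ln (-2*x)/q)) {-1/2<..<0}" "(\<lambda>x. ln (-2*x)/q) ` {-1/2<..<0} = {..<0}" "(\<lambda>x. -(ln (-2*x)/q)) ` {-1/2<..<0} = {0<..}"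
    using injN1[OF q sub] injN2[OF q sub] imgN1_0[OF q] imgN2_0[OF q] by auto
  note P = piece[OF hh_int(2)[OF q f g] Edens_meas[OF f g] pr(1,2,3) d1 pr(4,6) d2 pr(5,7) eq]
  show "set_integrable lborel {-1/2<..<0} (Edens q f g)" by (rule P(1))
  show "(LINT x:{-1/2<..<0}|lborel. Edens q f g x) = (LINT y:{..<0}|lborel. hh2 q f g y) + (LINT y:{0<..}|lborel. hh2 q f g y)"
    by (rule P(2))
qed

lemma pieceP:
  fixes q t :: real
  assumes q: "0 < q" and f: "inK q f" and g: "inK q g" and t: "0 < t" "t \<le> 1/2"
  shows "set_integrable lborel {0<..<t} (Edens q f g)"
    "(LINT x:{0<..<t}|lborel. Edens q f g x) = (LINT y:{..<ln (2*t)/q}|lborel. hh1 q f g y) + (LINT y:{-(ln (2*t)/q)<..}|lborel. hh1 q f g y)"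
proof -
  have sub: "{0<..<t} \<subseteq> {0<..}" using t by auto
  have d1: "\<And>x. x \<in> {0<..<t} \<Longrightarrow> ((\<lambda>x. ln (2*x)/q) has_field_derivative 1/(q*x)) (at x)"
    using dpos1 q sub by auto
  have d2: "\<And>x. x \<in> {0<..<t} \<Longrightarrow> ((\<lambda>x. -(ln (2*x)/q)) has_field_derivative -1/(q*x)) (at x)"
    using dpos2 q sub by auto
  have eq: "\<And>x. x \<in> {0<..<t} \<Longrightarrow> Edens q f g x = \<bar>1/(q*x)\<bar> *\<^sub>R hh1 q f g ((\<lambda>x. ln (2*x)/q) x) + \<bar>-1/(q*x)\<bar> *\<^sub>R hh1 q f g ((\<lambda>x. -(ln (2*x)/q)) x)"
    using Edens_pos[OF q] t by auto
  have pr: "{0<..<t} \<in> sets borel" "{..<ln (2*t)/q} \<in> sets borel" "{-(ln (2*t)/q)<..} \<in> sets borel"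
     "inj_on (\<lambda>x. ln (2*x)/q) {0<..<t}" "inj_on (\<lambda>x. -(ln (2*x)/q)) {0<..<t}" "(\<lambda>x. ln (2*x)/q) ` {0<..<t} = {..<ln (2*t)/q}" "(\<lambda>x. -(ln (2*x)/q)) ` {0<..<t} = {-(ln (2*t)/q)<..}"
    using injP1[OF q sub] injP2[OF q sub] imgP1[OF q t] imgP2[OF q t] by auto
  note P = piece[OF hh_int(1)[OF q f g] Edens_meas[OF f g] pr(1,2,3) d1 pr(4,6) d2 pr(5,7) eq]
  show "set_integrable lborel {0<..<t} (Edens q f g)" by (rule P(1))
  show "(LINT x:{0<..<t}|lborel. Edens q f g x) = (LINT y:{..<ln (2*t)/q}|lborel. hh1 q f g y) + (LINT y:{-(ln (2*t)/q)<..}|lborel. hh1 q f g y)"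
    by (rule P(2))
qed

lemma F_neg:
  fixes q t :: real
  assumes q: "0 < q" and t: "-1/2 \<le> t" "t < 0"
  shows "ipK q f (Eres q t g) = (LINT k:{ln (-2*t)/q<..-(ln (-2*t)/q)}|lborel. hh2 q f g k)"
proof -
  have a: "ln (-2*t)/q \<le> 0" using q t by (auto intro!: divide_nonpos_pos)
  show ?thesis
    unfolding ipK_def Eres_def psub_def Proj2_def set_lebesgue_integral_def using t
    by (intro Bochner_Integration.integral_cong) (use a in \<open>auto simp: hh2_def indicator_def\<close>)
qed

lemma F_zero: "ipK q f (Eres q 0 g) = integral\<^sup>L lborel (hh2 q f g)"
  unfolding ipK_def Eres_def psub_def Proj1_def Ident_def hh2_def
  by (intro Bochner_Integration.integral_cong) auto

lemma F_pos:
  fixes q t :: real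
  assumes q: "0 < q" and f: "inK q f" and g: "inK q g" and t: "0 < t" "t \<le> 1/2"
  shows "ipK q f (Eres q t g) = integral\<^sup>L lborel (hh1 q f g) + integral\<^sup>L lborel (hh2 q f g)
     - (LINT k:{ln (2*t)/q<..-(ln (2*t)/q)}|lborel. hh1 q f g k)"
proof -
  have a: "ln (2*t)/q \<le> 0" using q t by (auto intro!: divide_nonpos_pos)
  define A where "A = {ln (2*t)/q<..-(ln (2*t)/q)}"
  have i1: "integrable lborel (hh1 q f g)" and i2: "integrable lborel (hh2 q f g)" using hh_int[OF q f g] by auto
  have i3: "integrable lborel (\<lambda>k. indicator A k *\<^sub>R hh1 q f g k)"
    by (rule integrable_mult_indicator) (auto simp: A_def i1)
  have "ipK q f (Eres q t g) = (LINT k|lborel. hh1 q f g k + hh2 q f g k - indicator A k *\<^sub>R hh1 q f g k)"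
    unfolding ipK_def Eres_def psub_def padd_def Proj1_def Ident_def using t a
    by (intro Bochner_Integration.integral_cong) (auto simp: hh1_def hh2_def indicator_def A_def algebra_simps)
  also have "\<dots> = integral\<^sup>L lborel (hh1 q f g) + integral\<^sup>L lborel (hh2 q f g) - (LINT k|lborel. indicator A k *\<^sub>R hh1 q f g k)"
    using i1 i2 i3 by simp
  finally show ?thesis unfolding set_lebesgue_integral_def A_def .
qed


lemma ae_set_int:
  fixes f :: "real \<Rightarrow> complex"
  assumes X: "finite X" and ab: "\<And>x. x \<notin> X \<Longrightarrow> (x \<in> A) = (x \<in> B)"
  shows "set_integrable lborel A f = set_integrable lborel B f"
  unfolding set_integrable_def
  by (rule integrable_discrete_difference[where X=X]) (use X ab in \<open>auto simp: countable_finite indicator_def\<close>)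

lemma ae_set_lint:
  fixes f :: "real \<Rightarrow> complex"
  assumes X: "finite X" and ab: "\<And>x. x \<notin> X \<Longrightarrow> (x \<in> A) = (x \<in> B)"
  shows "(LINT x:A|lborel. f x) = (LINT x:B|lborel. f x)"
  unfolding set_lebesgue_integral_def
  by (rule integral_discrete_difference[where X=X]) (use X ab in \<open>auto simp: countable_finite indicator_def\<close>)

lemma si_sub: "integrable lborel H \<Longrightarrow> A \<in> sets borel \<Longrightarrow> set_integrable lborel A H"
  for H :: "real \<Rightarrow> complex"
  unfolding set_integrable_def by (rule integrable_mult_indicator) auto

lemma un2:
  fixes f :: "real \<Rightarrow> complex"
  assumes "set_integrable lborel A f" "set_integrable lborel B f" "A \<in> sets borel" "B \<in> sets borel" "A \<inter> B = {}"
  shows "set_integrable lborel (A \<union> B) f" "(LINT x:A \<union> B|lborel. f x) = (LINT x:A|lborel. f x) + (LINT x:B|lborel. f x)"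
  using assms by (auto intro: set_integrable_Un set_integral_Un)

lemma LINT_UNIV: "(LINT x:UNIV|M. f x) = integral\<^sup>L M f"
  unfolding set_lebesgue_integral_def by simp

lemma split_lines:
  fixes H :: "real \<Rightarrow> complex"
  assumes H: "integrable lborel H" and ab: "a \<le> b"
  shows "integral\<^sup>L lborel H = (LINT x:{..<a}|lborel. H x) + (LINT x:{a<..b}|lborel. H x) + (LINT x:{b<..}|lborel. H x)"
proof -
  have i: "set_integrable lborel A H" if "A \<in> sets borel" for A using si_sub[OF H that] .
  have "integral\<^sup>L lborel H = (LINT x:UNIV|lborel. H x)" by (simp add: LINT_UNIV)
  also have "\<dots> = (LINT x:({..<a} \<union> {a<..b}) \<union> {b<..}|lborel. H x)"
    by (rule ae_set_lint[where X="{a}"]) (use ab in auto)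
  also have "\<dots> = (LINT x:{..<a} \<union> {a<..b}|lborel. H x) + (LINT x:{b<..}|lborel. H x)"
    by (rule un2(2)) (use ab in \<open>auto intro!: i\<close>)
  also have "(LINT x:{..<a} \<union> {a<..b}|lborel. H x) = (LINT x:{..<a}|lborel. H x) + (LINT x:{a<..b}|lborel. H x)"
    by (rule un2(2)) (auto intro!: i)
  finally show ?thesis .
qed

lemma main:
  fixes q :: real
  assumes q: "0 < q" and f: "inK q f" and g: "inK q g"
  shows "set_integrable lborel {-1/2..1/2::real} (Edens q f g) \<and>
         (\<forall>s t. -1/2 \<le> s \<and> s \<le> t \<and> t \<le> 1/2 \<longrightarrow>
            ipK q f (Eres q t g) - ipK q f (Eres q s g) = (LINT x:{s..t}|lborel. Edens q f g x))"
proof -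
  let ?E = "Edens q f g"
  have i1: "integrable lborel (hh1 q f g)" and i2: "integrable lborel (hh2 q f g)" using hh_int[OF q f g] by auto
  note N0 = pieceN0[OF q f g] and PH = pieceP[OF q f g, of "1/2"]
  have IU: "set_integrable lborel ({-1/2<..<0} \<union> {0<..<1/2}) ?E"
    by (rule un2(1)) (use N0 PH in auto)
  have IE: "set_integrable lborel {-1/2..1/2::real} ?E"
    using IU by (subst ae_set_int[where X="{-1/2,0,1/2}"]) auto
  have IS: "set_integrable lborel A ?E" if "A \<in> sets borel" "A \<subseteq> {-1/2..1/2}" for A
    using set_integrable_subset[OF IE] that by auto
  have I2: "integral\<^sup>L lborel (hh2 q f g) = (LINT y:{..<0}|lborel. hh2 q f g y) + (LINT y:{0<..}|lborel. hh2 q f g y)"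
    using split_lines[OF i2, of 0 0] by (simp add: set_lebesgue_integral_def[of _ "{}"])
  have key: "(LINT x:{-1/2..t}|lborel. ?E x) = ipK q f (Eres q t g)" if t: "-1/2 \<le> t" "t \<le> 1/2" for t
  proof -
    consider "t = -1/2" | "-1/2 < t \<and> t < 0" | "t = 0" | "0 < t" using t by linarith
    then show ?thesis
    proof cases
      case 1
      have "(LINT x:{-1/2..t}|lborel. ?E x) = (LINT x:{}|lborel. ?E x)"
        by (rule ae_set_lint[where X="{-1/2}"]) (use 1 in auto)
      also have "\<dots> = 0" by (simp add: set_lebesgue_integral_def)
      also have "\<dots> = ipK q f (Eres q t g)" using F_neg[OF q, of t] 1 by (simp add: set_lebesgue_integral_def[of _ "{}"])
      finally show ?thesis .
    next
      case 2
      define a where "a = ln (-2*t)/q"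
      have a: "a < 0" unfolding a_def using 2 q by (auto intro!: divide_neg_pos ln_less_zero)
      have "(LINT x:{-1/2..t}|lborel. ?E x) = (LINT x:{-1/2<..<t}|lborel. ?E x)"
        by (rule ae_set_lint[where X="{-1/2,t}"]) auto
      also have "\<dots> = (LINT y:{a<..<0}|lborel. hh2 q f g y) + (LINT y:{0<..< -a}|lborel. hh2 q f g y)"
        using pieceN(2)[OF q f g, of t] 2 unfolding a_def by simp
      also have "\<dots> = (LINT y:{a<..<0} \<union> {0<..< -a}|lborel. hh2 q f g y)"
        by (rule un2(2)[symmetric]) (auto intro!: si_sub[OF i2])
      also have "\<dots> = (LINT y:{a<..-a}|lborel. hh2 q f g y)"
        by (rule ae_set_lint[where X="{0,-a}"]) (use a in auto)
      also have "\<dots> = ipK q f (Eres q t g)" using F_neg[OF q, of t] 2 unfolding a_def by simp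
      finally show ?thesis .
    next
      case 3
      have "(LINT x:{-1/2..t}|lborel. ?E x) = (LINT x:{-1/2<..<0}|lborel. ?E x)"
        by (rule ae_set_lint[where X="{-1/2,0}"]) (use 3 in auto)
      also have "\<dots> = integral\<^sup>L lborel (hh2 q f g)" using N0(2) I2 by simp
      also have "\<dots> = ipK q f (Eres q t g)" using F_zero 3 by simp
      finally show ?thesis .
    next
      case 4
      define a where "a = ln (2*t)/q"
      have a: "a \<le> 0" unfolding a_def using 4 t q by (auto intro!: divide_nonpos_pos)
      have "(LINT x:{-1/2..t}|lborel. ?E x) = (LINT x:{-1/2<..<0} \<union> {0<..<t}|lborel. ?E x)"
        by (rule ae_set_lint[where X="{-1/2,0,t}"]) (use 4 in auto)
      also have "\<dots> = (LINT x:{-1/2<..<0}|lborel. ?E x) + (LINT x:{0<..<t}|lborel. ?E x)"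
        by (rule un2(2)) (use N0 pieceP(1)[OF q f g, of t] 4 t in auto)
      also have "\<dots> = integral\<^sup>L lborel (hh2 q f g) + ((LINT y:{..<a}|lborel. hh1 q f g y) + (LINT y:{-a<..}|lborel. hh1 q f g y))"
        using N0(2) I2 pieceP(2)[OF q f g, of t] 4 t unfolding a_def by simp
      also have "\<dots> = integral\<^sup>L lborel (hh1 q f g) + integral\<^sup>L lborel (hh2 q f g) - (LINT y:{a<..-a}|lborel. hh1 q f g y)"
        using split_lines[OF i1, of a "-a"] a by simp
      also have "\<dots> = ipK q f (Eres q t g)" using F_pos[OF q f g, of t] 4 t unfolding a_def by simp
      finally show ?thesis .
    qed
  qed
  have "ipK q f (Eres q t g) - ipK q f (Eres q s g) = (LINT x:{s..t}|lborel. ?E x)"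
    if st: "-1/2 \<le> s" "s \<le> t" "t \<le> 1/2" for s t
  proof -
    have "(LINT x:{-1/2..t}|lborel. ?E x) = (LINT x:{-1/2..<s} \<union> {s..t}|lborel. ?E x)"
      using st by (intro arg_cong[where f="\<lambda>A. LINT x:A|lborel. ?E x"]) auto
    also have "\<dots> = (LINT x:{-1/2..<s}|lborel. ?E x) + (LINT x:{s..t}|lborel. ?E x)"
      by (rule un2(2)) (use st in \<open>auto intro!: IS\<close>)
    also have "(LINT x:{-1/2..<s}|lborel. ?E x) = (LINT x:{-1/2..s}|lborel. ?E x)"
      by (rule ae_set_lint[where X="{s}"]) auto
    finally have "(LINT x:{-1/2..t}|lborel. ?E x) = (LINT x:{-1/2..s}|lborel. ?E x) + (LINT x:{s..t}|lborel. ?E x)" .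
    then show ?thesis using key[of t] key[of s] st by (metis add_diff_cancel_left' order_trans)
  qed
  with IE show ?thesis by blast
qed

theorem lemma4p5:
  fixes R r :: real and f g :: dpair
  assumes "R > 0" and "r > 0"
    and "inK (q1 R r) f" and "inK (q1 R r) g"
  shows "set_integrable lborel {-1/2..1/2::real} (Edens (q1 R r) f g) \<and>
         (\<forall>s t. -1/2 \<le> s \<and> s \<le> t \<and> t \<le> 1/2 \<longrightarrow>
            ipK (q1 R r) f (Eres (q1 R r) t g) - ipK (q1 R r) f (Eres (q1 R r) s g)
              = (LINT x:{s..t}|lborel. Edens (q1 R r) f g x))"
proof (rule main)
  show "0 < q1 R r" unfolding q1_def using assms(1,2) by (intro add_pos_pos divide_pos_pos) auto
qed (use assms in auto)

end
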